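(* For every integer $N\ge 0$, let $T_{1\times 4}(6,N)$ be the number of tilings of a $6\times n$ rectangle, $n=2N/3$, by $N$ tiles of size $1\times 4$ (and $0$ if $2N/3\notin\mathbb{Z}$). Then, as formal power series, \[ \sum_{N\ge 0} T_{1\times 4}(6,N)\,z^N=\frac{(1-z^6)^3}{1-7z^6+6z^{12}-4z^{18}+z^{24}}. \]
   Context: A tiling of an $m\times n$ rectangle (width $m$, length $n$, made of $mn$ unit squares) by $a\times b$ tiles is a partition of the rectangle into non-overlapping axis-parallel $a\times b$ rectangles with integer corner coordinates, each placed in either of its two orientations. Tilings related by reflections or rotations of the rectangle are counted as distinct. The empty tiling counts once for $N=0$. *)

theory Defs
  imports Main "HOL-Computational_Algebra.Formal_Power_Series"
begin

text \<open>Cells are unit squares indexed by their lower-left corner (i,j) with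
  i < m (width direction) and j < n (length direction).\<close>

definition rect_cells :: "nat \<Rightarrow> nat \<Rightarrow> nat \<Rightarrow> nat \<Rightarrow> (nat \<times> nat) set" where
  "rect_cells x y w h = {x..<x+w} \<times> {y..<y+h}"

definition is_tile :: "nat \<Rightarrow> nat \<Rightarrow> (nat \<times> nat) set \<Rightarrow> bool" where
  "is_tile a b P \<longleftrightarrow> (\<exists>x y. P = rect_cells x y a b \<or> P = rect_cells x y b a)"

definition is_tiling :: "nat \<Rightarrow> nat \<Rightarrow> nat \<Rightarrow> nat \<Rightarrow> (nat \<times> nat) set set \<Rightarrow> bool" where
  "is_tiling a b m n T \<longleftrightarrow>
     finite T \<and> (\<forall>P\<in>T. is_tile a b P) \<and>
     (\<forall>P\<in>T. \<forall>Q\<in>T. P \<noteq> Q \<longrightarrow> P \<inter> Q = {}) \<and>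
     \<Union>T = {0..<m} \<times> {0..<n}"

definition tiling_count :: "nat \<Rightarrow> nat \<Rightarrow> nat \<Rightarrow> nat \<Rightarrow> nat \<Rightarrow> nat" where
  "tiling_count a b m n N = card {T. is_tiling a b m n T \<and> card T = N}"

definition T_1x4_6 :: "nat \<Rightarrow> nat" where
  "T_1x4_6 N = (if 3 dvd (2 * N) then tiling_count 1 4 6 (2 * N div 3) N else 0)"

end

theory Submission
  imports Defs
begin


definition til :: "(nat \<times> nat) set \<Rightarrow> nat \<Rightarrow> (nat \<times> nat) set set set" where
  "til R k = {T. finite T \<and> (\<forall>P\<in>T. is_tile 1 4 P) \<and>
     (\<forall>P\<in>T. \<forall>Q\<in>T. P \<noteq> Q \<longrightarrow> P \<inter> Q = {}) \<and> \<Union>T = R \<and> card T = k}"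

lemma tile_ne: "is_tile 1 4 P \<Longrightarrow> P \<noteq> {}"
proof -
  assume "is_tile 1 4 P"
  then obtain x y where "P = rect_cells x y 1 4 \<or> P = rect_cells x y 4 1" unfolding is_tile_def by blast
  then have "(x, y) \<in> P" by (auto simp: rect_cells_def)
  then show ?thesis by blast
qed

lemma til_fin: "finite R \<Longrightarrow> finite (til R k)"
proof -
  assume "finite R"
  have "til R k \<subseteq> Pow (Pow R)" unfolding til_def by auto
  then show ?thesis using \<open>finite R\<close> by (meson finite_Pow_iff finite_subset)
qed

lemma card_til0: "card (til R 0) = (if R = {} then 1 else 0)"
proof -
  have "til R 0 = (if R = {} then {{}} else {})"
    unfolding til_def by auto
  then show ?thesis by simp
qed

lemma til_empty_Suc: "til {} (Suc k) = {}"
  unfolding til_def using tile_ne by fastforce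

lemma til_insert:
  assumes t: "is_tile 1 4 t" "t \<subseteq> R"
  shows "{T \<in> til R (Suc k). t \<in> T} = insert t ` til (R - t) k"
proof (intro set_eqI iffI)
  fix T assume "T \<in> {T \<in> til R (Suc k). t \<in> T}"
  then have T: "finite T" "\<forall>P\<in>T. is_tile 1 4 P" "\<forall>P\<in>T. \<forall>Q\<in>T. P \<noteq> Q \<longrightarrow> P \<inter> Q = {}"
    "\<Union>T = R" "card T = Suc k" "t \<in> T" unfolding til_def by auto
  have "\<Union>(T - {t}) = R - t"
  proof
    show "\<Union>(T - {t}) \<subseteq> R - t" using T(3,4,6) by blast
    show "R - t \<subseteq> \<Union>(T - {t})" using T(4) by blast
  qed
  then have "T - {t} \<in> til (R - t) k" using T unfolding til_def by auto
  moreover have "T = insert t (T - {t})" using T(6) by auto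
  ultimately show "T \<in> insert t ` til (R - t) k" by blast
next
  fix T assume "T \<in> insert t ` til (R - t) k"
  then obtain T' where T': "T = insert t T'" "T' \<in> til (R - t) k" by auto
  then have T'p: "finite T'" "\<forall>P\<in>T'. is_tile 1 4 P" "\<forall>P\<in>T'. \<forall>Q\<in>T'. P \<noteq> Q \<longrightarrow> P \<inter> Q = {}"
    "\<Union>T' = R - t" "card T' = k" unfolding til_def by auto
  have "t \<notin> T'"
  proof
    assume "t \<in> T'" then have "t \<subseteq> R - t" using T'p(4) by blast
    then show False using tile_ne[OF t(1)] by blast
  qed
  moreover have dj: "\<forall>P\<in>T'. P \<inter> t = {}" using T'p(4) by blast
  ultimately have c: "card (insert t T') = Suc k" using T'p(1,5) by simp
  have f: "finite (insert t T')" using T'p(1) by simp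
  have ti: "\<forall>P\<in>insert t T'. is_tile 1 4 P" using T'p(2) t(1) by simp
  have d: "\<forall>P\<in>insert t T'. \<forall>Q\<in>insert t T'. P \<noteq> Q \<longrightarrow> P \<inter> Q = {}"
    using T'p(3) dj by blast
  have u: "\<Union>(insert t T') = R" using T'p(4) t(2) by blast
  have "insert t T' \<in> til R (Suc k)" unfolding til_def mem_Collect_eq by (intro conjI f ti d u c)
  then show "T \<in> {T \<in> til R (Suc k). t \<in> T}" using T'(1) by simp
qed

definition Ht :: "nat \<Rightarrow> nat \<Rightarrow> (nat \<times> nat) set" where "Ht i c = rect_cells i c 1 4"
definition Vt :: "nat \<Rightarrow> nat \<Rightarrow> (nat \<times> nat) set" where "Vt i c = rect_cells i c 4 1"

lemma first_cell:
  assumes m: "(i0, c) \<in> R" and lex: "\<And>i j. (i, j) \<in> R \<Longrightarrow> c < j \<or> (c = j \<and> i0 \<le> i)"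
    and T: "T \<in> til R k"
  shows "Ht i0 c \<in> T \<or> Vt i0 c \<in> T"
proof -
  from T m obtain P where P: "P \<in> T" "(i0, c) \<in> P" unfolding til_def by auto
  then have PR: "P \<subseteq> R" using T unfolding til_def by auto
  have "is_tile 1 4 P" using P T unfolding til_def by blast
  then obtain x y where "P = rect_cells x y 1 4 \<or> P = rect_cells x y 4 1"
    unfolding is_tile_def by blast
  then show ?thesis
  proof
    assume Pe: "P = rect_cells x y 1 4"
    then have "(x, y) \<in> R" using PR by (auto simp: rect_cells_def)
    from lex[OF this] P(2) Pe have "x = i0 \<and> y = c" by (auto simp: rect_cells_def)
    then show ?thesis using P Pe by (simp add: Ht_def)
  next
    assume Pe: "P = rect_cells x y 4 1"
    then have "(x, y) \<in> R" using PR by (auto simp: rect_cells_def)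
    from lex[OF this] P(2) Pe have "x = i0 \<and> y = c" by (auto simp: rect_cells_def)
    then show ?thesis using P Pe by (simp add: Vt_def)
  qed
qed

lemma HV_ne: "Ht i c \<noteq> Vt i c" "(i, c) \<in> Ht i c" "(i, c) \<in> Vt i c"
proof -
  have "(i, c+1) \<in> Ht i c" "(i, c+1) \<notin> Vt i c" by (auto simp: Ht_def Vt_def rect_cells_def)
  then show "Ht i c \<noteq> Vt i c" by blast
qed (auto simp: Ht_def Vt_def rect_cells_def)

lemma tiles_HV: "is_tile 1 4 (Ht i c)" "is_tile 1 4 (Vt i c)"
  unfolding is_tile_def Ht_def Vt_def by blast+

lemma til_sub: "T \<in> til R k \<Longrightarrow> P \<in> T \<Longrightarrow> P \<subseteq> R"
  unfolding til_def by blast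

lemma til_disj: "T \<in> til R k \<Longrightarrow> P \<in> T \<Longrightarrow> Q \<in> T \<Longrightarrow> P \<noteq> Q \<Longrightarrow> P \<inter> Q = {}"
  unfolding til_def by blast

lemma card_ins:
  assumes t: "is_tile 1 4 t" "t \<subseteq> R"
  shows "card {T \<in> til R (Suc k). t \<in> T} = card (til (R - t) k)"
proof -
  have "card {T \<in> til R (Suc k). t \<in> T} = card (insert t ` til (R - t) k)" using til_insert[OF t] by simp
  also have "\<dots> = card (til (R - t) k)"
  proof (rule card_image, rule inj_onI)
    fix X Y assume XY: "X \<in> til (R - t) k" "Y \<in> til (R - t) k" "insert t X = insert t Y"
    have "t \<notin> X" using til_sub[OF XY(1)] tile_ne[OF t(1)] by blast
    moreover have "t \<notin> Y" using til_sub[OF XY(2)] tile_ne[OF t(1)] by blast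
    ultimately show "X = Y" using XY(3) by (metis insert_ident)
  qed
  finally show ?thesis .
qed

lemma card_step:
  assumes fin: "finite R" and m: "(i0, c) \<in> R" and lex: "\<And>i j. (i, j) \<in> R \<Longrightarrow> c < j \<or> (c = j \<and> i0 \<le> i)"
  shows "card (til R (Suc k)) =
    (if Ht i0 c \<subseteq> R then card (til (R - Ht i0 c) k) else 0) +
    (if Vt i0 c \<subseteq> R then card (til (R - Vt i0 c) k) else 0)"
proof -
  let ?H = "Ht i0 c" and ?V = "Vt i0 c"
  let ?A = "{T \<in> til R (Suc k). ?H \<in> T}" and ?B = "{T \<in> til R (Suc k). ?V \<in> T}"
  have un: "til R (Suc k) = ?A \<union> ?B" using first_cell[OF m lex, of _ "Suc k"] by blast
  have dis: "?A \<inter> ?B = {}"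
  proof -
    { fix T assume "T \<in> ?A" "T \<in> ?B"
      then have "?H \<inter> ?V = {}" using HV_ne(1) til_disj by blast
      then have False using HV_ne(2,3) by blast }
    then show ?thesis by blast
  qed
  have cA: "card ?A = (if ?H \<subseteq> R then card (til (R - ?H) k) else 0)"
  proof (cases "?H \<subseteq> R")
    case True
    then show ?thesis using card_ins[OF tiles_HV(1) True] by simp
  next
    case False
    then have "?A = {}" using til_sub by blast
    then have "card ?A = 0" by (metis card.empty)
    then show ?thesis by (simp only: if_not_P[OF False])
  qed
  have cB: "card ?B = (if ?V \<subseteq> R then card (til (R - ?V) k) else 0)"
  proof (cases "?V \<subseteq> R")
    case True
    then show ?thesis using card_ins[OF tiles_HV(2) True] by simp
  next
    case False
    then have "?B = {}" using til_sub by blast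
    then have "card ?B = 0" by (metis card.empty)
    then show ?thesis by (simp only: if_not_P[OF False])
  qed
  have fA: "finite ?A" and fB: "finite ?B" using til_fin[OF fin, of "Suc k"] by auto
  have "card (til R (Suc k)) = card (?A \<union> ?B)" using un by (rule arg_cong)
  also have "\<dots> = card ?A + card ?B" by (rule card_Un_disjoint[OF fA fB dis])
  finally have "card (til R (Suc k)) = card ?A + card ?B" .
  then show ?thesis using cA cB by simp
qed


fun lmin :: "nat list \<Rightarrow> nat" where
  "lmin [] = 0" | "lmin [x] = x" | "lmin (x#y#xs) = min x (lmin (y#xs))"

fun fi :: "'a \<Rightarrow> 'a list \<Rightarrow> nat" where
  "fi c [] = 0" | "fi c (x#xs) = (if x = c then 0 else Suc (fi c xs))"

definition vt :: "nat list \<Rightarrow> nat \<Rightarrow> nat \<Rightarrow> nat list" where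
  "vt h i c = h[i := c+1, Suc i := c+1, Suc (Suc i) := c+1, Suc (Suc (Suc i)) := c+1]"

definition vok :: "nat list \<Rightarrow> nat \<Rightarrow> nat \<Rightarrow> bool" where
  "vok h i c \<longleftrightarrow> i + 4 \<le> 6 \<and> list_all (\<lambda>k. h!k = c) [i..<i+4]"

definition nxt :: "nat list \<Rightarrow> nat list list" where
  "nxt h = (let c = lmin h; i = fi c h in
     h[i := c+4] # (if vok h i c then [vt h i c] else []))"

definition nrm :: "nat list \<Rightarrow> nat list" where
  "nrm h = map (\<lambda>x. x - lmin h) h"

fun Bf :: "nat \<Rightarrow> nat list \<Rightarrow> nat" where
  "Bf 0 s = (if s = replicate 6 0 then 1 else 0)"
| "Bf (Suc k) s = sum_list (map (\<lambda>t. Bf k (nrm t)) (nxt s))"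

definition Rg :: "nat list \<Rightarrow> nat \<Rightarrow> (nat \<times> nat) set" where
  "Rg h n = {(i, j). i < 6 \<and> h ! i \<le> j \<and> j < n}"

lemma lmin_in: "h \<noteq> [] \<Longrightarrow> lmin h \<in> set h"
  by (induction h rule: lmin.induct) (auto simp: min_def)

lemma lmin_le: "x \<in> set h \<Longrightarrow> lmin h \<le> x"
  by (induction h rule: lmin.induct) (auto simp: min_def)

lemma fi_props: "c \<in> set h \<Longrightarrow> fi c h < length h \<and> h ! fi c h = c"
  by (induction h) auto

lemma fi_first: "i < fi c h \<Longrightarrow> h ! i \<noteq> c"
proof (induction h arbitrary: i)
  case (Cons x xs) then show ?case by (cases i) (auto split: if_splits)
qed simp

lemma lmin_shift: "(\<forall>x\<in>set h. c \<le> x) \<Longrightarrow> lmin (map (\<lambda>x. x - c) h) = lmin h - c"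
  by (induction h rule: lmin.induct) (auto simp: min_def)

lemma fi_shift: "(\<forall>x\<in>set (h::nat list). c \<le> x) \<Longrightarrow> c \<le> d \<Longrightarrow> fi (d - c) (map (\<lambda>x. x - c) h) = fi d h"
proof (induction h)
  case (Cons a h)
  then have "c \<le> a" by simp
  then have e: "(a - c = d - c) = (a = d)" using Cons.prems(2) by (metis eq_diff_iff)
  show ?case using Cons e by simp
qed simp

lemma nrm_shift:
  assumes "\<forall>x\<in>set g. c \<le> x" shows "nrm (map (\<lambda>x. x - c) g) = nrm g"
proof (cases "g = []")
  case False
  have "c \<le> lmin g" using assms lmin_in[OF False] by blast
  moreover have "\<forall>x\<in>set g. lmin g \<le> x" using lmin_le by blast
  ultimately have "\<forall>x\<in>set g. x - c - (lmin g - c) = x - lmin g" by auto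
  then show ?thesis unfolding nrm_def lmin_shift[OF assms] map_map o_def
    by (intro map_cong) auto
qed (simp add: nrm_def)

lemma sum_upd: "i < length h \<Longrightarrow> sum_list (h[i := v]) + h ! i = sum_list h + (v::nat)"
proof (induction h arbitrary: i)
  case (Cons x xs) then show ?case by (cases i) auto
qed simp

lemma len6: "length h = 6 \<Longrightarrow> h = [h!0, h!1, h!2, h!3, h!4, h!5]"
  by (rule nth_equalityI) (auto simp: nth_Cons' less_Suc_eq numeral_eq_Suc)



context
  fixes h :: "nat list" and n :: nat
  assumes len: "length h = 6"
begin

private lemma hne: "h \<noteq> []" using len by auto

lemma lm_in: "lmin h \<in> set h" using lmin_in[OF hne] .

lemma i0_props: "fi (lmin h) h < 6" "h ! fi (lmin h) h = lmin h"
  using fi_props[OF lm_in] len by auto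

lemma lm_le: "i < 6 \<Longrightarrow> lmin h \<le> h ! i"
  using lmin_le[of "h!i" h] len by simp

lemma Rg_fin: "finite (Rg h n)"
proof -
  have "Rg h n \<subseteq> {0..<6} \<times> {0..<n}" unfolding Rg_def by auto
  then show ?thesis by (rule finite_subset) simp
qed

lemma m_in: "lmin h < n \<Longrightarrow> (fi (lmin h) h, lmin h) \<in> Rg h n"
  using i0_props unfolding Rg_def by simp

lemma Rg_empty: "\<not> lmin h < n \<Longrightarrow> Rg h n = {}"
  using lm_le unfolding Rg_def by fastforce

lemma m_lex: "(i, j) \<in> Rg h n \<Longrightarrow> lmin h < j \<or> (lmin h = j \<and> fi (lmin h) h \<le> i)"
proof -
  assume a: "(i, j) \<in> Rg h n"
  then have i6: "i < 6" and hj: "h ! i \<le> j" unfolding Rg_def by auto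
  have "lmin h \<le> h ! i" using lm_le[OF i6] .
  moreover have "j = lmin h \<Longrightarrow> fi (lmin h) h \<le> i"
    using fi_first[of i "lmin h" h] hj \<open>lmin h \<le> h ! i\<close> by fastforce
  ultimately show ?thesis using hj by fastforce
qed

lemma H_sub: "Ht (fi (lmin h) h) (lmin h) \<subseteq> Rg h n \<longleftrightarrow> lmin h + 4 \<le> n"
proof
  assume "Ht (fi (lmin h) h) (lmin h) \<subseteq> Rg h n"
  moreover have "(fi (lmin h) h, lmin h + 3) \<in> Ht (fi (lmin h) h) (lmin h)"
    by (auto simp: Ht_def rect_cells_def)
  ultimately show "lmin h + 4 \<le> n" unfolding Rg_def by auto
next
  assume "lmin h + 4 \<le> n"
  then show "Ht (fi (lmin h) h) (lmin h) \<subseteq> Rg h n"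
    using i0_props by (auto simp: Ht_def rect_cells_def Rg_def)
qed

lemma H_diff: "Rg h n - Ht (fi (lmin h) h) (lmin h) = Rg (h[fi (lmin h) h := lmin h + 4]) n"
  using i0_props len by (auto simp: Ht_def rect_cells_def Rg_def nth_list_update split: if_splits)

lemma V_sub: "lmin h < n \<Longrightarrow> Vt (fi (lmin h) h) (lmin h) \<subseteq> Rg h n \<longleftrightarrow> vok h (fi (lmin h) h) (lmin h)"
proof
  let ?i = "fi (lmin h) h"
  assume "lmin h < n" "Vt ?i (lmin h) \<subseteq> Rg h n"
  have s: "k < 6 \<and> h ! k \<le> lmin h" if "?i \<le> k" "k < ?i + 4" for k
  proof -
    have "(k, lmin h) \<in> Vt ?i (lmin h)" using that by (simp add: Vt_def rect_cells_def)
    then have "(k, lmin h) \<in> Rg h n" using \<open>Vt ?i (lmin h) \<subseteq> Rg h n\<close> by blast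
    then show ?thesis by (simp add: Rg_def)
  qed
  have "?i + 4 \<le> 6" using s[of "?i + 3"] by simp
  moreover have "h ! k = lmin h" if "k \<in> set [?i..<?i+4]" for k
    using s[of k] lm_le[of k] that by auto
  ultimately show "vok h ?i (lmin h)" by (simp add: vok_def list_all_iff)
next
  let ?i = "fi (lmin h) h"
  assume "lmin h < n" "vok h ?i (lmin h)"
  then show "Vt ?i (lmin h) \<subseteq> Rg h n"
    by (auto simp: Vt_def rect_cells_def Rg_def vok_def list_all_iff)
qed

lemma vt_nth: "i + 4 \<le> 6 \<Longrightarrow> k < 6 \<Longrightarrow> vt h i c ! k = (if i \<le> k \<and> k < i + 4 then c + 1 else h ! k)"
  using len unfolding vt_def by (auto simp: nth_list_update)

lemma vt_len: "length (vt h i c) = 6" using len by (simp add: vt_def)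

lemma V_diff: assumes v: "vok h (fi (lmin h) h) (lmin h)"
  shows "Rg h n - Vt (fi (lmin h) h) (lmin h) = Rg (vt h (fi (lmin h) h) (lmin h)) n"
proof -
  let ?i = "fi (lmin h) h"
  have i4: "?i + 4 \<le> 6" and hk: "\<And>k. ?i \<le> k \<Longrightarrow> k < ?i + 4 \<Longrightarrow> h ! k = lmin h"
    using v by (auto simp: vok_def list_all_iff)
  show ?thesis
    using hk unfolding Rg_def Vt_def rect_cells_def by (auto simp: vt_nth[OF i4] split: if_splits)
qed

lemma nxt_nrm: "nxt (nrm h) = map (map (\<lambda>x. x - lmin h)) (nxt h)"
proof -
  let ?c = "lmin h" and ?f = "\<lambda>x. x - lmin h"
  have ge: "\<forall>x\<in>set h. ?c \<le> x" using lmin_le by blast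
  have l0: "lmin (nrm h) = 0" unfolding nrm_def using lmin_shift[OF ge] by simp
  have f0: "fi 0 (nrm h) = fi ?c h" unfolding nrm_def using fi_shift[OF ge, of ?c] by simp
  have u1: "(nrm h)[fi ?c h := 0 + 4] = map ?f (h[fi ?c h := ?c + 4])"
    unfolding nrm_def by (simp add: map_update)
  have v1: "vok (nrm h) (fi ?c h) 0 = vok h (fi ?c h) ?c"
  proof -
    have e: "(nrm h ! k = 0) = (h ! k = ?c)" if "k < 6" for k
      using lm_le[OF that] len that by (auto simp: nrm_def)
    show ?thesis unfolding vok_def list_all_iff using e by auto
  qed
  have v2: "vt (nrm h) (fi ?c h) 0 = map ?f (vt h (fi ?c h) ?c)"
    unfolding vt_def nrm_def by (simp add: map_update)
  show ?thesis unfolding nxt_def Let_def l0 f0 u1 v1 v2 by simp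
qed

lemma Bf_Suc_nrm: "Bf (Suc k) (nrm h) = Bf k (nrm (h[fi (lmin h) h := lmin h + 4])) +
   (if vok h (fi (lmin h) h) (lmin h) then Bf k (nrm (vt h (fi (lmin h) h) (lmin h))) else 0)"
proof -
  let ?c = "lmin h"
  have ge: "\<forall>x\<in>set h. ?c \<le> x" using lmin_le by blast
  have g1: "\<forall>x\<in>set (h[fi ?c h := ?c + 4]). ?c \<le> x"
    using ge by (auto dest: set_update_subset_insert[THEN subsetD])
  have g2: "\<forall>x\<in>set (vt h (fi ?c h) ?c). ?c \<le> x"
    using ge unfolding vt_def by (auto dest!: set_update_subset_insert[THEN subsetD])
  show ?thesis
    unfolding Bf.simps nxt_nrm unfolding nxt_def Let_def
    using nrm_shift[OF g1] nrm_shift[OF g2] by simp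
qed

end


lemma vt_sum: assumes len: "length h = 6" and v: "vok h i c"
  shows "sum_list (vt h i c) = sum_list h + 4"
proof -
  obtain a0 a1 a2 a3 a4 a5 where h: "h = [a0,a1,a2,a3,a4,a5]" using len6[OF len] by blast
  have "i \<le> 2" using v by (simp add: vok_def)
  then show ?thesis using v unfolding h
    by (cases i; cases "i - 1"; auto simp: vt_def vok_def numeral_eq_Suc)
qed

lemma set_nth6: "length g = 6 \<Longrightarrow> x \<in> set g \<Longrightarrow> \<exists>j<6. x = g ! j"
  by (metis in_set_conv_nth)

lemma Bf_nz: "Bf k (nrm g) \<noteq> 0 \<Longrightarrow> length g = 6 \<Longrightarrow> \<exists>C. (\<forall>x\<in>set g. x \<le> C) \<and> sum_list g + 4 * k = 6 * C"
proof (induction k arbitrary: g)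
  case 0
  then have nz: "nrm g = replicate 6 0" by (simp split: if_splits)
  have gne: "g \<noteq> []" using 0 by auto
  have "\<forall>x\<in>set g. x = lmin g"
  proof
    fix x assume x: "x \<in> set g"
    have "x - lmin g \<in> set (nrm g)" using x by (simp add: nrm_def)
    then have "x - lmin g = 0" using nz by simp
    then show "x = lmin g" using lmin_le[OF x] by simp
  qed
  define c where "c = lmin g"
  have all: "\<forall>x\<in>set g. x = c" using \<open>\<forall>x\<in>set g. x = lmin g\<close> c_def by simp
  then have "g = replicate 6 c" using 0(2) replicate_length_same by metis
  then have "sum_list g = 6 * c" by (simp add: sum_list_replicate)
  then show ?case using all by auto
next
  case (Suc k)
  let ?c = "lmin g" let ?i = "fi (lmin g) g"
  note len = Suc.prems(2)
  note i0 = i0_props[OF len]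
  show ?case
  proof (cases "Bf k (nrm (g[?i := ?c + 4])) \<noteq> 0")
    case True
    let ?g = "g[?i := ?c + 4]"
    obtain C where C: "\<forall>x\<in>set ?g. x \<le> C" "sum_list ?g + 4 * k = 6 * C"
      using Suc.IH[OF True] len by auto
    have "?c + 4 \<le> C" using C(1) i0 len by (metis length_list_update nth_list_update_eq nth_mem)
    have le: "\<forall>x\<in>set g. x \<le> C"
    proof
      fix x assume "x \<in> set g"
      then obtain j where j: "j < 6" "x = g ! j" using set_nth6[OF len] by blast
      show "x \<le> C"
      proof (cases "j = ?i")
        case True then show ?thesis using j i0 \<open>?c + 4 \<le> C\<close> by simp
      next
        case False then have "x = ?g ! j" using j by simp
        then show ?thesis using C(1) j len by (metis length_list_update nth_mem)
      qed
    qed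
    have "sum_list ?g + g ! ?i = sum_list g + (?c + 4)" using sum_upd[of ?i g "?c + 4"] i0 len by simp
    then have "sum_list ?g = sum_list g + 4" using i0 by simp
    then show ?thesis using le C(2) by (intro exI[of _ C]) simp
  next
    case False
    have "(if vok g ?i ?c then Bf k (nrm (vt g ?i ?c)) else 0) \<noteq> 0"
      using Suc.prems(1) Bf_Suc_nrm[OF len, of k] False by (simp del: Bf.simps)
    then have v: "vok g ?i ?c" and nz: "Bf k (nrm (vt g ?i ?c)) \<noteq> 0"
      by (auto split: if_splits)
    let ?g = "vt g ?i ?c"
    have i4: "?i + 4 \<le> 6" using v by (simp add: vok_def)
    obtain C where C: "\<forall>x\<in>set ?g. x \<le> C" "sum_list ?g + 4 * k = 6 * C"
      using Suc.IH[OF nz] vt_len[OF len] by auto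
    have le: "\<forall>x\<in>set g. x \<le> C"
    proof
      fix x assume "x \<in> set g"
      then obtain j where j: "j < 6" "x = g ! j" using set_nth6[OF len] by blast
      have "?g ! j \<le> C" using C(1) j vt_len[OF len] by (metis nth_mem)
      moreover have "g ! j \<le> ?g ! j" using vt_nth[OF len i4 j(1)] v i0 lm_le[OF len j(1)]
        by (auto simp: vok_def list_all_iff)
      ultimately show "x \<le> C" using j by simp
    qed
    show ?thesis using le C(2) vt_sum[OF len v] by (intro exI[of _ C]) simp
  qed
qed

lemma sum_le: "(\<forall>x\<in>set h. x \<le> (n::nat)) \<Longrightarrow> sum_list h \<le> length h * n"
  by (induction h) auto

lemma sum_eq_all: "(\<forall>x\<in>set h. x \<le> (n::nat)) \<Longrightarrow> sum_list h = length h * n \<Longrightarrow> \<forall>x\<in>set h. x = n"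
proof (induction h)
  case (Cons a h)
  have "sum_list h \<le> length h * n" using Cons.prems(1) sum_le[of h n] by simp
  then have "a = n" using Cons.prems by simp
  then show ?case using Cons by simp
qed simp

lemma main_count:
  "length h = 6 \<Longrightarrow> \<forall>x\<in>set h. x \<le> n \<Longrightarrow> sum_list h + 4 * k = 6 * n \<Longrightarrow>
   card (til (Rg h n) k) = Bf k (nrm h)"
proof (induction k arbitrary: h)
  case 0
  then have all: "\<forall>x\<in>set h. x = n" using sum_eq_all[of h n] by simp
  then have hr: "h = replicate 6 n" using 0(1) replicate_length_same by metis
  then have "lmin h = n" by (simp add: numeral_eq_Suc)
  then have "nrm h = replicate 6 0" using hr by (simp add: nrm_def)
  moreover have "Rg h n = {}" using hr by (auto simp: Rg_def)
  ultimately show ?case by (simp add: card_til0)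
next
  case (Suc k)
  note len = Suc.prems(1)
  let ?c = "lmin h" let ?i = "fi (lmin h) h"
  note i0 = i0_props[OF len]
  have "?c < n"
  proof (rule ccontr)
    assume "\<not> ?c < n"
    then have "\<forall>x\<in>set h. x = n" using Suc.prems(2) lmin_le by fastforce
    then have "h = replicate 6 n" using len replicate_length_same by metis
    then have "sum_list h = 6 * n" by (simp add: sum_list_replicate)
    then show False using Suc.prems(3) by simp
  qed
  have stp: "card (til (Rg h n) (Suc k)) =
    (if Ht ?i ?c \<subseteq> Rg h n then card (til (Rg h n - Ht ?i ?c) k) else 0) +
    (if Vt ?i ?c \<subseteq> Rg h n then card (til (Rg h n - Vt ?i ?c) k) else 0)"
    by (rule card_step[OF Rg_fin[OF len] m_in[OF len \<open>?c < n\<close>]]) (rule m_lex[OF len])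
  let ?g = "h[?i := ?c + 4]"
  have t1: "(if Ht ?i ?c \<subseteq> Rg h n then card (til (Rg h n - Ht ?i ?c) k) else 0) = Bf k (nrm ?g)"
  proof (cases "?c + 4 \<le> n")
    case True
    have sg: "sum_list ?g + h ! ?i = sum_list h + (?c + 4)" using sum_upd[of ?i h "?c + 4"] i0 len by simp
    have "\<forall>x\<in>set ?g. x \<le> n" using Suc.prems(2) True
      by (auto dest!: set_update_subset_insert[THEN subsetD])
    moreover have "sum_list ?g + 4 * k = 6 * n" using sg i0 Suc.prems(3) by simp
    ultimately have "card (til (Rg ?g n) k) = Bf k (nrm ?g)" using Suc.IH len by simp
    then show ?thesis using H_sub[OF len] H_diff[OF len] True by simp
  next
    case False
    have "Bf k (nrm ?g) = 0"
    proof (rule ccontr)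
      assume "Bf k (nrm ?g) \<noteq> 0"
      then obtain C where C: "\<forall>x\<in>set ?g. x \<le> C" "sum_list ?g + 4 * k = 6 * C"
        using Bf_nz len by fastforce
      have sg: "sum_list ?g + h ! ?i = sum_list h + (?c + 4)" using sum_upd[of ?i h "?c + 4"] i0 len by simp
      then have "sum_list ?g = sum_list h + 4" using i0 by simp
      then have "C = n" using C(2) Suc.prems(3) by simp
      moreover have "?c + 4 \<le> C" using C(1) i0 len by (metis length_list_update nth_list_update_eq nth_mem)
      ultimately show False using False by simp
    qed
    then show ?thesis using H_sub[OF len] False by simp
  qed
  have t2: "(if Vt ?i ?c \<subseteq> Rg h n then card (til (Rg h n - Vt ?i ?c) k) else 0) =
    (if vok h ?i ?c then Bf k (nrm (vt h ?i ?c)) else 0)"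
  proof (cases "vok h ?i ?c")
    case True
    let ?g = "vt h ?i ?c"
    have i4: "?i + 4 \<le> 6" using True by (simp add: vok_def)
    have "\<forall>x\<in>set ?g. x \<le> n"
    proof
      fix x assume "x \<in> set ?g"
      then obtain j where j: "j < 6" "x = ?g ! j" using set_nth6[OF vt_len[OF len]] by blast
      have "h ! j \<le> n" using Suc.prems(2) j len by (metis nth_mem)
      then show "x \<le> n" using j vt_nth[OF len i4 j(1)] \<open>?c < n\<close> by simp
    qed
    moreover have "sum_list ?g + 4 * k = 6 * n" using vt_sum[OF len True] Suc.prems(3) by simp
    ultimately have "card (til (Rg ?g n) k) = Bf k (nrm ?g)" using Suc.IH vt_len[OF len] by simp
    then show ?thesis using V_sub[OF len \<open>?c < n\<close>] V_diff[OF len True] True by simp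
  next
    case False
    then show ?thesis using V_sub[OF len \<open>?c < n\<close>] by simp
  qed
  show ?case using stp t1 t2 Bf_Suc_nrm[OF len, of k] by (simp del: Bf.simps)
qed



definition SL :: "nat list list" where "SL = [[0,0,0,0,0,0], [0,0,0,0,1,1], [0,0,0,0,2,2], [0,0,0,0,3,3], [0,0,1,1,1,1], [0,0,2,2,2,2], [0,0,3,3,3,3], [0,1,1,1,1,0], [0,2,2,2,2,0], [0,3,3,3,3,0], [1,0,0,0,0,1], [1,1,0,0,0,0], [1,1,1,1,0,0], [1,1,1,1,4,0], [1,1,4,0,0,0], [1,1,4,4,0,0], [1,1,4,4,4,0], [1,4,0,0,0,1], [1,4,4,0,0,1], [1,4,4,4,0,1], [2,0,0,0,0,2], [2,2,0,0,0,0], [2,2,2,2,0,0], [2,2,2,2,4,0], [2,2,4,0,0,0], [2,2,4,4,0,0], [2,2,4,4,4,0], [2,4,0,0,0,2], [2,4,4,0,0,2], [2,4,4,4,0,2], [3,0,0,0,0,3], [3,3,0,0,0,0], [3,3,3,3,0,0], [3,3,3,3,4,0], [3,3,4,0,0,0], [3,3,4,4,0,0], [3,3,4,4,4,0], [3,4,0,0,0,3], [3,4,4,0,0,3], [3,4,4,4,0,3], [4,0,0,0,0,0], [4,0,0,0,1,1], [4,0,0,0,2,2], [4,0,0,0,3,3], [4,0,1,1,1,1], [4,0,2,2,2,2], [4,0,3,3,3,3], [4,1,1,1,1,0], [4,2,2,2,2,0], [4,3,3,3,3,0], [4,4,0,0,0,0], [4,4,0,0,1,1], [4,4,0,0,2,2],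 [4,4,0,0,3,3], [4,4,4,0,0,0], [4,4,4,0,1,1], [4,4,4,0,2,2], [4,4,4,0,3,3], [4,4,4,4,0,0], [4,4,4,4,4,0]]"

definition TR :: "nat list list" where "TR = [[40,12], [41,0], [42,1], [43,2], [44], [45], [46], [47], [48], [49], [17,0], [14,0], [13], [3], [15], [16], [6], [18], [19], [9], [27,10], [24,11], [23], [2], [25], [26], [5], [28], [29], [8], [37,20], [34,21], [33], [1], [35], [36], [4], [38], [39], [7], [50,47], [51], [52], [53], [31], [21], [11], [30], [20], [10], [54,31], [55], [56], [57], [58], [32], [22], [12], [59], [0]]"

lemma TR_eq: "map (\<lambda>s. map (\<lambda>t. fi (nrm t) SL) (nxt s)) SL = TR" by code_simp

lemma closed0: "list_all (\<lambda>s. list_all (\<lambda>t. nrm t \<in> set SL) (nxt s)) SL" by code_simp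

lemma closed: "s \<in> set SL \<Longrightarrow> t \<in> set (nxt s) \<Longrightarrow> nrm t \<in> set SL"
  using closed0 by (auto simp: list_all_iff)

definition stp :: "nat list \<Rightarrow> nat list" where
  "stp v = map (\<lambda>is. sum_list (map (\<lambda>j. v ! j) is)) TR"

fun vecs :: "nat \<Rightarrow> nat list" where
  "vecs 0 = map (\<lambda>s. if s = replicate 6 0 then 1 else 0) SL"
| "vecs (Suc k) = stp (vecs k)"

lemma len_SL: "length SL = 60" by (simp add: SL_def)
lemma len_TR: "length TR = 60" by (simp add: TR_def)

lemma len_vecs: "length (vecs k) = 60"
  by (cases k) (simp_all add: len_SL stp_def len_TR)

lemma vecs_Bf: "i < 60 \<Longrightarrow> vecs k ! i = Bf k (SL ! i)"
proof (induction k arbitrary: i)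
  case 0 then show ?case using len_SL by simp
next
  case (Suc k)
  let ?s = "SL ! i"
  have s: "?s \<in> set SL" using Suc.prems len_SL by simp
  have tr: "TR ! i = map (\<lambda>t. fi (nrm t) SL) (nxt ?s)"
    unfolding TR_eq[symmetric] using Suc.prems len_SL by simp
  have "vecs (Suc k) ! i = sum_list (map (\<lambda>j. vecs k ! j) (TR ! i))"
    using Suc.prems len_TR by (simp add: stp_def)
  also have "\<dots> = sum_list (map (\<lambda>t. vecs k ! fi (nrm t) SL) (nxt ?s))"
    unfolding tr by (simp add: o_def)
  also have "\<dots> = sum_list (map (\<lambda>t. Bf k (nrm t)) (nxt ?s))"
  proof (rule arg_cong[where f = sum_list], rule map_cong[OF refl])
    fix t assume "t \<in> set (nxt ?s)"
    then have "nrm t \<in> set SL" using closed[OF s] by blast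
    then have "fi (nrm t) SL < length SL \<and> SL ! fi (nrm t) SL = nrm t" by (rule fi_props)
    then have "fi (nrm t) SL < 60" "SL ! fi (nrm t) SL = nrm t" using len_SL by auto
    then show "vecs k ! fi (nrm t) SL = Bf k (nrm t)" using Suc.IH by simp
  qed
  also have "\<dots> = Bf (Suc k) ?s" by simp
  finally show ?case .
qed

definition chkv :: "nat list \<Rightarrow> nat list \<Rightarrow> nat list \<Rightarrow> nat list \<Rightarrow> nat list \<Rightarrow> bool" where
 "chkv a b c d e = list_all (\<lambda>(x,y,z,u,w). int x - 7 * int y + 6 * int z - 4 * int u + int w = 0) (zip a (zip b (zip c (zip d e))))"

lemma chk24: "chkv (vecs 24) (vecs 18) (vecs 12) (vecs 6) (vecs 0)" by code_simp

lemma vals: "map (\<lambda>k. vecs k ! 0) [0..<24] = [1, 0, 0, 0, 0, 0, 4, 0, 0, 0, 0, 0, 25, 0, 0, 0, 0, 0, 154, 0, 0, 0, 0, 0]"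
  by code_simp

definition cb :: "nat \<Rightarrow> nat list \<Rightarrow> int" where
  "cb k s = int (Bf k s) - 7 * int (Bf (k-6) s) + 6 * int (Bf (k-12) s) - 4 * int (Bf (k-18) s) + int (Bf (k-24) s)"

lemma cb24: "s \<in> set SL \<Longrightarrow> cb 24 s = 0"
proof -
  assume "s \<in> set SL"
  then obtain i where i: "i < 60" "s = SL ! i" using len_SL by (metis in_set_conv_nth)
  have "list_all (\<lambda>(x,y,z,u,w). int x - 7 * int y + 6 * int z - 4 * int u + int w = 0)
     (zip (vecs 24) (zip (vecs 18) (zip (vecs 12) (zip (vecs 6) (vecs 0)))))"
    using chk24 by (simp add: chkv_def)
  then have "int (vecs 24 ! i) - 7 * int (vecs 18 ! i) + 6 * int (vecs 12 ! i) - 4 * int (vecs 6 ! i) + int (vecs 0 ! i) = 0"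
    using i(1) by (simp add: list_all_length len_vecs del: vecs.simps)
  moreover have vb: "\<And>j. vecs j ! i = Bf j s" using vecs_Bf[OF i(1)] i(2) by simp
  ultimately show ?thesis unfolding cb_def by (simp del: vecs.simps Bf.simps add: vb)
qed

lemma lin5: "sum_list (map (\<lambda>t. int (f1 t) - 7 * int (f2 t) + 6 * int (f3 t) - 4 * int (f4 t) + int (f5 t)) xs)
  = int (sum_list (map f1 xs)) - 7 * int (sum_list (map f2 xs)) + 6 * int (sum_list (map f3 xs))
    - 4 * int (sum_list (map f4 xs)) + int (sum_list (map f5 xs))"
  by (induction xs) (auto simp: algebra_simps)

lemma sum0: "(\<forall>x\<in>set xs. f x = 0) \<Longrightarrow> sum_list (map f xs) = (0::int)"
  by (induction xs) auto

lemma cb_zero: "24 \<le> k \<Longrightarrow> \<forall>s\<in>set SL. cb k s = 0"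
proof (induction k rule: dec_induct)
  case base then show ?case using cb24 by blast
next
  case (step m)
  show ?case
  proof
    fix s assume s: "s \<in> set SL"
    have e: "Suc m - 6 = Suc (m - 6)" "Suc m - 12 = Suc (m - 12)" "Suc m - 18 = Suc (m - 18)"
      "Suc m - 24 = Suc (m - 24)" using step.hyps by auto
    have "cb (Suc m) s = sum_list (map (\<lambda>t. cb m (nrm t)) (nxt s))"
      unfolding cb_def e Bf.simps lin5 ..
    also have "\<dots> = 0" using step.IH closed[OF s] sum0[of "nxt s" "\<lambda>t. cb m (nrm t)"]
      by blast
    finally show "cb (Suc m) s = 0" .
  qed
qed



lemma nrm_z: "nrm (replicate 6 0) = replicate 6 0"
  by (simp add: nrm_def numeral_eq_Suc)

lemma T_eq: "T_1x4_6 N = Bf N (replicate 6 0)"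
proof (cases "3 dvd (2 * N)")
  case True
  define n where "n = 2 * N div 3"
  have n6: "6 * n = 4 * N" using True unfolding n_def by auto
  have R: "Rg (replicate 6 0) n = {0..<6} \<times> {0..<n}" by (auto simp: Rg_def)
  have S: "{T. is_tiling 1 4 6 n T \<and> card T = N} = til ({0..<6} \<times> {0..<n}) N"
    unfolding is_tiling_def til_def by auto
  have "card (til (Rg (replicate 6 0) n) N) = Bf N (nrm (replicate 6 0))"
    by (rule main_count) (use n6 in \<open>auto simp: sum_list_replicate\<close>)
  then show ?thesis using True unfolding T_1x4_6_def tiling_count_def n_def[symmetric] S R nrm_z
    by simp
next
  case False
  have "Bf N (replicate 6 0) = 0"
  proof (rule ccontr)
    assume "Bf N (replicate 6 0) \<noteq> 0"
    then obtain C where "sum_list (replicate 6 (0::nat)) + 4 * N = 6 * C"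
      using Bf_nz[of N "replicate 6 0"] nrm_z by auto
    then have "2 * N = 3 * C" by (simp add: sum_list_replicate)
    then show False using False by simp
  qed
  then show ?thesis using False by (simp add: T_1x4_6_def)
qed

definition numc :: "nat \<Rightarrow> int" where
  "numc N = (if N = 0 then 1 else if N = 6 then -3 else if N = 12 then 3 else if N = 18 then -1 else 0)"

lemma z_SL: "replicate 6 0 \<in> set SL" by (simp add: SL_def numeral_eq_Suc)
lemma SL0: "SL ! 0 = replicate 6 0" by (simp add: SL_def numeral_eq_Suc)

lemma small: "k < 24 \<Longrightarrow> Bf k (replicate 6 0) = [1, 0, 0, 0, 0, 0, 4, 0, 0, 0, 0, 0, 25, 0, 0, 0, 0, 0, 154, 0, 0, 0, 0, 0::nat] ! k"
proof -
  assume k: "k < 24"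
  have "map (\<lambda>k. vecs k ! 0) [0..<24] ! k = [1, 0, 0, 0, 0, 0, 4, 0, 0, 0, 0, 0, 25, 0, 0, 0, 0, 0, 154, 0, 0, 0, 0, 0::nat] ! k"
    using vals by simp
  then show ?thesis using k vecs_Bf[of 0 k] SL0 by (simp del: vecs.simps)
qed

lemma recur: "int (Bf N z) - 7 * (if 6 \<le> N then int (Bf (N-6) z) else 0)
     + 6 * (if 12 \<le> N then int (Bf (N-12) z) else 0) - 4 * (if 18 \<le> N then int (Bf (N-18) z) else 0)
     + (if 24 \<le> N then int (Bf (N-24) z) else 0) = numc N" if zdef: "z = replicate 6 0"
proof (cases "24 \<le> N")
  case True
  then show ?thesis using cb_zero[OF True] z_SL zdef by (auto simp: cb_def numc_def)
next
  case False
  then have "N < 24" by simp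
  note sm = small[folded zdef]
  have "N = 0 \<or> N = 1 \<or> N = 2 \<or> N = 3 \<or> N = 4 \<or> N = 5 \<or> N = 6 \<or> N = 7 \<or> N = 8 \<or> N = 9 \<or> N = 10 \<or> N = 11 \<or>
    N = 12 \<or> N = 13 \<or> N = 14 \<or> N = 15 \<or> N = 16 \<or> N = 17 \<or> N = 18 \<or> N = 19 \<or> N = 20 \<or> N = 21 \<or> N = 22 \<or> N = 23"
    using \<open>N < 24\<close> by presburger
  then show ?thesis
    by (elim disjE) (simp_all add: sm numc_def del: Bf.simps)
qed


lemma fps_part:
  fixes a :: "nat \<Rightarrow> nat"
  assumes rec: "\<And>N. int (a N) - 7 * (if 6 \<le> N then int (a (N-6)) else 0)
     + 6 * (if 12 \<le> N then int (a (N-12)) else 0) - 4 * (if 18 \<le> N then int (a (N-18)) else 0)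
     + (if 24 \<le> N then int (a (N-24)) else 0) = numc N"
  shows "(Abs_fps (\<lambda>N. of_nat (a N)) :: rat fps) =
    (1 - fps_X ^ 6) ^ 3 /
    (1 - 7 * fps_X ^ 6 + 6 * fps_X ^ 12 - 4 * fps_X ^ 18 + fps_X ^ 24)"
proof -
  define A where "A = (Abs_fps (\<lambda>N. of_nat (a N)) :: rat fps)"
  define D :: "rat fps" where "D = 1 - 7 * fps_X ^ 6 + 6 * fps_X ^ 12 - 4 * fps_X ^ 18 + fps_X ^ 24"
  have num0: "(1 - fps_X ^ 6) ^ 3 = (1 - 3 * fps_X ^ 6 + 3 * fps_X ^ 12 - fps_X ^ 18 :: rat fps)"
    by (simp add: power3_eq_cube algebra_simps flip: power_add)
  have num: "(1 - fps_X ^ 6) ^ 3 = (1 - fps_const 3 * fps_X ^ 6 + fps_const 3 * fps_X ^ 12 - fps_X ^ 18 :: rat fps)"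
    unfolding num0 by (simp add: fps_numeral_fps_const)
  have D2: "A * D = fps_X^0 * A - fps_const 7 * (fps_X ^ 6 * A) + fps_const 6 * (fps_X ^ 12 * A)
      - fps_const 4 * (fps_X ^ 18 * A) + fps_X ^ 24 * A"
    by (simp add: D_def algebra_simps fps_numeral_fps_const)
  have rq: "rat_of_int (int (a N)) - 7 * (if 6 \<le> N then rat_of_int (int (a (N-6))) else 0)
     + 6 * (if 12 \<le> N then rat_of_int (int (a (N-12))) else 0) - 4 * (if 18 \<le> N then rat_of_int (int (a (N-18))) else 0)
     + (if 24 \<le> N then rat_of_int (int (a (N-24))) else 0) = rat_of_int (numc N)" for N
    using arg_cong[OF rec[of N], of rat_of_int] by (simp split: if_splits)
  have "A * D = 1 - fps_const 3 * fps_X ^ 6 + fps_const 3 * fps_X ^ 12 - fps_X ^ 18"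
  proof (rule fps_ext)
    fix N
    show "fps_nth (A * D) N = fps_nth (1 - fps_const 3 * fps_X ^ 6 + fps_const 3 * fps_X ^ 12 - fps_X ^ 18 :: rat fps) N"
      unfolding D2 using rq[of N]
      by (auto simp: fps_X_power_mult_nth A_def numc_def fps_numeral_nth split: if_splits)
  qed
  moreover have "D \<noteq> 0"
  proof
    assume "D = 0" then have "fps_nth D 0 = 0" by simp
    then show False by (simp add: D_def fps_numeral_nth)
  qed
  ultimately have "A = (1 - fps_X ^ 6) ^ 3 / D"
    using num by (metis nonzero_mult_div_cancel_right)
  then show ?thesis by (simp add: A_def D_def)
qed

theorem mainTheorem5:
  shows "(Abs_fps (\<lambda>N. of_nat (T_1x4_6 N)) :: rat fps) =
    (1 - fps_X ^ 6) ^ 3 /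
    (1 - 7 * fps_X ^ 6 + 6 * fps_X ^ 12 - 4 * fps_X ^ 18 + fps_X ^ 24)"
  unfolding T_eq by (rule fps_part) (rule recur, rule refl)

end
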